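(* Let $S_A>0$, $c_{\mathrm{TX}}>0$, $\phi>0$, $\theta=\phi/c_{\mathrm{TX}}$, $B=1$, $0<\lambda<\lambda_{\mathrm{th}}=\left(\sqrt{1+1/S_A}+\sqrt{\theta}\right)^{-2}$, $v_{\mathrm{th}}(\lambda,0)=\sqrt{\lambda\theta}+\frac{\lambda}{2}+\sqrt{\lambda}\sqrt{\sqrt{\lambda\theta}+\frac{\lambda}{4}+\frac{1}{S_A}}$. For $V_k\in(0,1]$, $\zeta\geq0$, $S_M\geq0$ let $$f(\zeta,S_M,V_k)=\zeta e^{-\zeta}\frac{V_k}{1+V_k\frac{S_AS_M}{S_A+S_M}}+(1-\zeta e^{-\zeta})V_k+\lambda\zeta(1+\theta S_M),$$ and let the myopic policy $(\zeta^{(MP)}(V_k),S_M^{(MP)}(V_k))$ be a minimizer of $f(\cdot,\cdot,V_k)$ over $\zeta\geq0,S_M\geq0$ (with $S_M=0$ when $\zeta=0$). Then: (i) if $V_k\leq v_{\mathrm{th}}(\lambda,0)$, then $(\zeta^{(MP)}(V_k),S_M^{(MP)}(V_k))=(0,0)$; (ii) otherwise, $$S_M^{(MP)}(V_k)=\left(\frac{e^{-\zeta^{(MP)}(V_k)/2}}{\sqrt{\lambda\theta}}-\frac{1}{V_k}\right)\frac{V_kS_A}{1+V_kS_A},$$ and $\zeta^{(MP)}(V_k)$ is the unique $\zeta\in\left(0,\min\left\{1,2\ln\left(\frac{V_k}{\sqrt{\lambda\theta}}\right)\right\}\right)$ solving $$\frac{-V_kS_A}{1+V_kS_A}\left(V_k-e^{\zeta/2}\sqrt{\lambda\theta}\frac{2-\zeta}{1-\zeta}+\frac{e^{\zeta}}{1-\zeta}\frac{\lambda\theta}{V_k}\right)+\frac{\lambda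 e^{\zeta}}{1-\zeta}=0.$$
   Context: Decentralized sensing scheme with a single channel, in the large-network limit: $V_k$ is the fusion center's prior variance; $\zeta$ is the normalized activation probability; a transmission succeeds with probability $\zeta e^{-\zeta}$, in which case the posterior variance is $V_k/(1+V_k\frac{S_AS_M}{S_A+S_M})$ ($S_A$ ambient SNR, $S_M$ local measurement SNR), otherwise it is $V_k$; $\lambda$ is a Lagrange multiplier weighting the sensing-transmission cost. *)

theory Defs
  imports Complex_Main
begin

text \<open>Myopic cost: prior variance V, activation zeta, local SNR sM, ambient SNR sA,
  Lagrange multiplier lam, theta = phi / c_TX.\<close>
definition myopic_cost :: "real \<Rightarrow> real \<Rightarrow> real \<Rightarrow> real \<Rightarrow> real \<Rightarrow> real \<Rightarrow> real" where
  "myopic_cost sA theta lam zeta sM V =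
     zeta * exp (- zeta) * (V / (1 + V * (sA * sM / (sA + sM))))
     + (1 - zeta * exp (- zeta)) * V + lam * zeta * (1 + theta * sM)"

definition lambda_th :: "real \<Rightarrow> real \<Rightarrow> real" where
  "lambda_th sA theta = 1 / (sqrt (1 + 1 / sA) + sqrt theta)\<^sup>2"

definition v_th :: "real \<Rightarrow> real \<Rightarrow> real \<Rightarrow> real" where
  "v_th sA theta lam = sqrt (lam * theta) + lam / 2
     + sqrt lam * sqrt (sqrt (lam * theta) + lam / 4 + 1 / sA)"

definition zeta_eq :: "real \<Rightarrow> real \<Rightarrow> real \<Rightarrow> real \<Rightarrow> real \<Rightarrow> bool" where
  "zeta_eq sA theta lam V z \<longleftrightarrow>
     (- V * sA / (1 + V * sA)) *
       (V - exp (z / 2) * sqrt (lam * theta) * ((2 - z) / (1 - z))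
          + exp z / (1 - z) * (lam * theta / V))
     + lam * exp z / (1 - z) = 0"

end

theory Submission
  imports Defs
begin


lemma alg1:
  fixes V s z w k l :: real
  assumes "V>0" "1+V*s>0" "z\<noteq>1"
  shows "(-V*s/(1+V*s))*(V - w*k*((2-z)/(1-z)) + w^2/(1-z)*(k^2/V)) + l*w^2/(1-z)
     = -(V/(1-z))*((V*s/(1+V*s))*(1-k*w/V)*(1-k*w/V-z) - l*w^2/V)"
proof -
  define d where "d = 1 - z"
  have z0: "d \<noteq> 0" using assms d_def by simp
  have zz: "z = 1 - d" using d_def by simp
  define e where "e = 1 + V*s"
  have e0: "e \<noteq> 0" using assms e_def by simp
  have ss: "V*s = e - 1" using e_def by simp
  have "(-V*s/e)*(V - w*k*((2-z)/d) + w^2/d*(k^2/V)) + l*w^2/d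
     = -(V/d)*((V*s/e)*(1-k*w/V)*(1-k*w/V-z) - l*w^2/V)"
    unfolding zz using z0 e0 assms(1) by (simp add: field_simps) (simp add: algebra_simps power2_eq_square)
  then show ?thesis unfolding d_def e_def .
qed

lemma zeta_eq_iff:
  assumes s: "s>0" and V: "V>0" and lt: "l*th>0" and z1: "z\<noteq>1"
    and y: "y = sqrt(l*th)*exp(z/2)/V"
  shows "zeta_eq s th l V z \<longleftrightarrow> (V*s/(1+V*s))*(1-y)*(1-y-z) - (V/th)*y^2 = 0"
proof -
  define k where "k = sqrt(l*th)"
  define w where "w = exp(z/2)"
  have ez: "exp z = w^2" unfolding w_def by (simp add: power2_eq_square flip: exp_add)
  have kk: "l*th = k^2" unfolding k_def using lt by simp
  have th0: "th \<noteq> 0" using lt by auto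
  have a0: "1+V*s > 0" using mult_pos_pos[OF V s] by linarith
  have z0: "1 - z \<noteq> 0" using z1 by simp
  have k0: "k \<ge> 0" unfolding k_def using lt by simp
  have yy: "y = k*w/V" using y k_def w_def by simp
  have H: "(V/th)*y^2 = l*w^2/V" unfolding yy 
    using th0 V kk by (simp add: power2_eq_square field_simps) 
  have "zeta_eq s th l V z \<longleftrightarrow> (-V*s/(1+V*s))*(V - w*k*((2-z)/(1-z)) + w^2/(1-z)*(k^2/V)) + l*w^2/(1-z) = 0"
    unfolding zeta_eq_def k_def[symmetric] w_def[symmetric] ez kk using k0 by simp
  also have "\<dots> \<longleftrightarrow> -(V/(1-z))*((V*s/(1+V*s))*(1-k*w/V)*(1-k*w/V-z) - l*w^2/V) = 0"
    unfolding alg1[OF V a0 z1] ..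
  also have "\<dots> \<longleftrightarrow> (V*s/(1+V*s))*(1-y)*(1-y-z) - (V/th)*y^2 = 0"
    using z0 V H unfolding yy by simp
  finally show ?thesis .
qed


lemma cost_eq:
  assumes s: "s>0" and V: "V>0" and t: "t\<ge>0"
  shows "myopic_cost s th l z t V = V - z*exp(-z)*(V^2*s*t/(s+(1+V*s)*t)) + l*z*(1+th*t)"
proof -
  have st: "s + t > 0" using s t by simp
  have p: "V*s*t \<ge> 0" using s t V by simp
  have d: "s + (1+V*s)*t > 0" using st p by (simp add: algebra_simps)
  have "1 + V * (s * t / (s + t)) = (s + (1+V*s)*t)/(s+t)" using st by (simp add: field_simps)
  then have "V / (1 + V * (s * t / (s + t))) = V*(s+t)/(s + (1+V*s)*t)" using st d by simp
  also have "\<dots> = V - V^2*s*t/(s+(1+V*s)*t)" using d by (simp add: field_simps power2_eq_square)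
  finally have e: "V / (1 + V * (s * t / (s + t))) = V - V^2*s*t/(s+(1+V*s)*t)" .
  show ?thesis unfolding myopic_cost_def e by (simp add: algebra_simps)
qed

lemma quad_nonneg:
  fixes X Y Z t :: real
  assumes "X > 0" "Y \<ge> 0" "Z \<ge> 0" "X*Y = Z^2"
  shows "X*t^2 - 2*Z*t + Y \<ge> 0"
proof -
  have "X*(X*t^2 - 2*Z*t + Y) = (X*t - Z)^2" using assms(4) by (simp add: power2_eq_square algebra_simps)
  then have "X*(X*t^2 - 2*Z*t + Y) \<ge> 0" by simp
  then show ?thesis using assms(1) by (simp add: zero_le_mult_iff)
qed

lemma keyineq:
  assumes s: "s>0" and th: "th>0" and l: "l>0" and V: "V>0" and t: "t\<ge>0"
    and h: "V - sqrt(l*th) \<le> sqrt(l*(V+1/s))"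
  shows "V^2*s*t \<le> l*(1+th*t)*(s+(1+V*s)*t)"
proof -
  define k where "k = sqrt(l*th)"
  define r where "r = sqrt(l*(V+1/s))"
  have k0: "k \<ge> 0" and kk: "k^2 = l*th" unfolding k_def using l th by auto
  have vs: "V + 1/s > 0" using V s by (simp add: add_pos_pos)
  have r0: "r \<ge> 0" and rr: "r^2 = l*(V+1/s)" unfolding r_def using l vs by auto
  have Vle: "V \<le> r + k" using h unfolding k_def[symmetric] r_def[symmetric] by simp
  have V2: "V^2 \<le> (r+k)^2" using Vle V by (simp add: power_mono)
  have lin: "l*(1+V*s) + l*th*s = s*r^2 + s*k^2" unfolding rr kk using s by (simp add: field_simps)
  define X where "X = l*th*(1+V*s)"
  define Z where "Z = s*k*r"
  have X0: "X > 0" unfolding X_def using l th V s by (intro mult_pos_pos) (auto simp: add_pos_pos)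
  have XYZ: "X*(l*s) = Z^2" unfolding X_def Z_def using s
    by (simp add: power_mult_distrib kk rr field_simps) (simp add: algebra_simps power2_eq_square)
  have q: "X*t^2 - 2*Z*t + l*s \<ge> 0" using quad_nonneg[OF X0 _ _ XYZ] l s k0 r0 unfolding Z_def by simp
  have eq: "l*(1+th*t)*(s+(1+V*s)*t) - V^2*s*t = X*t^2 + (s*r^2 + s*k^2 - V^2*s)*t + l*s"
    unfolding X_def lin[symmetric] by (simp add: algebra_simps power2_eq_square)
  have "(s*r^2 + s*k^2 - V^2*s)*t \<ge> -2*Z*t"
  proof -
    have "s*V^2 \<le> s*(r+k)^2" using V2 s by (intro mult_left_mono) auto
    then have "s*r^2 + s*k^2 - V^2*s \<ge> -2*Z" unfolding Z_def
      by (simp add: power2_eq_square algebra_simps)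
    from mult_right_mono[OF this t] show ?thesis by simp
  qed
  then show ?thesis using eq q by linarith
qed

lemma strict_ineq:
  assumes s: "s>0" and th: "th>0" and l: "l>0" and V: "V>0"
    and h: "V - sqrt(l*th) > sqrt(l*(V+1/s))"
  defines "t0 \<equiv> s*sqrt(l*th)*sqrt(l*(V+1/s))/(l*th*(1+V*s))"
  shows "t0 > 0" "V^2*s*t0 > l*(1+th*t0)*(s+(1+V*s)*t0)"
proof -
  define k where "k = sqrt(l*th)"
  define r where "r = sqrt(l*(V+1/s))"
  have k0: "k > 0" and kk: "k^2 = l*th" unfolding k_def using l th by auto
  have vs: "V + 1/s > 0" using V s by (simp add: add_pos_pos)
  have r0: "r > 0" and rr: "r^2 = l*(V+1/s)" unfolding r_def using l vs by auto
  have Vle: "V > r + k" using h unfolding k_def[symmetric] r_def[symmetric] by simp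
  have V2: "V^2 > (r+k)^2" using Vle V r0 k0 by (simp add: power_strict_mono)
  have lin: "l*(1+V*s) + l*th*s = s*r^2 + s*k^2" unfolding rr kk using s by (simp add: field_simps)
  define X where "X = l*th*(1+V*s)"
  define Z where "Z = s*k*r"
  have X0: "X > 0" unfolding X_def using l th V s by (intro mult_pos_pos) (auto simp: add_pos_pos)
  have XYZ: "X*(l*s) = Z^2" unfolding X_def Z_def using s
    by (simp add: power_mult_distrib kk rr field_simps) (simp add: algebra_simps power2_eq_square)
  have tdef: "t0 = Z/X" unfolding t0_def X_def Z_def k_def r_def by simp
  show tp: "t0 > 0" unfolding tdef Z_def using X0 s k0 r0 by simp
  have eq: "l*(1+th*t0)*(s+(1+V*s)*t0) - V^2*s*t0 = X*t0^2 + (s*r^2 + s*k^2 - V^2*s)*t0 + l*s"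
    unfolding X_def lin[symmetric] by (simp add: algebra_simps power2_eq_square)
  have x1: "X*t0^2 = Z*t0" unfolding tdef using X0 by (simp add: power2_eq_square)
  have x2: "l*s = Z*t0" unfolding tdef using X0 XYZ by (simp add: field_simps power2_eq_square)
  have "X*t0^2 + (s*r^2 + s*k^2 - V^2*s)*t0 + l*s = s*t0*((r+k)^2 - V^2)"
    unfolding x1 x2 Z_def by (simp add: algebra_simps power2_eq_square)
  also have "\<dots> < 0" using V2 s tp by (simp add: mult_pos_neg)
  finally show "V^2*s*t0 > l*(1+th*t0)*(s+(1+V*s)*t0)" using eq by linarith
qed

lemma vth_le:
  assumes s: "s>0" and th: "th>0" and l: "l>0" and V: "V>0" and h: "V \<le> v_th s th l"
  shows "V - sqrt(l*th) \<le> sqrt(l*(V+1/s))"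
proof -
  define k where "k = sqrt(l*th)"
  have k0: "k \<ge> 0" and kk: "k^2 = l*th" unfolding k_def using l th by auto
  define m where "m = sqrt(l*k + l^2/4 + l/s)"
  have mm: "sqrt l * sqrt (k + l/4 + 1/s) = m" unfolding m_def
    by (simp add: real_sqrt_mult[symmetric] algebra_simps power2_eq_square)
  have m0: "m \<ge> 0" and m2: "m^2 = l*k + l^2/4 + l/s" unfolding m_def using l k0 s by auto
  have hv: "V - k - l/2 \<le> m" using h unfolding v_th_def k_def[symmetric] mm by simp
  show ?thesis
  proof (cases "V \<le> k")
    case True
    have "V + 1/s > 0" using V s by (simp add: add_pos_pos)
    then have "sqrt (l*(V+1/s)) \<ge> 0" using l by simp
    then show ?thesis using True k_def by linarith
  next
    case False
    have "(V-k)^2 \<le> l*(V+1/s)"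
    proof (cases "V - k \<ge> l/2")
      case True
      then have "(V-k-l/2)^2 \<le> m^2" using hv by (simp add: power_mono)
      then show ?thesis unfolding m2 by (simp add: algebra_simps power2_eq_square)
    next
      case F2: False
      have "(V-k)^2 \<le> (V-k)*(l/2)" using False F2 by (simp add: power2_eq_square mult_left_mono)
      also have "\<dots> \<le> V*l" using False k0 l V by (intro mult_mono) auto
      also have "\<dots> \<le> l*(V+1/s)" using l s by (simp add: algebra_simps)
      finally show ?thesis .
    qed
    then have "V - k \<le> sqrt (l*(V+1/s))" by (rule real_le_rsqrt)
    then show ?thesis unfolding k_def .
  qed
qed

lemma vth_gt:
  assumes s: "s>0" and th: "th>0" and l: "l>0" and V: "V>0" and h: "V > v_th s th l"
  shows "V - sqrt(l*th) > sqrt(l*(V+1/s))"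
proof -
  define k where "k = sqrt(l*th)"
  have k0: "k \<ge> 0" and kk: "k^2 = l*th" unfolding k_def using l th by auto
  define m where "m = sqrt(l*k + l^2/4 + l/s)"
  have mm: "sqrt l * sqrt (k + l/4 + 1/s) = m" unfolding m_def
    by (simp add: real_sqrt_mult[symmetric] algebra_simps power2_eq_square)
  have m0: "m \<ge> 0" and m2: "m^2 = l*k + l^2/4 + l/s" unfolding m_def using l k0 s by auto
  have hv: "V - k - l/2 > m" using h unfolding v_th_def k_def[symmetric] mm by simp
  then have "(V-k-l/2)^2 > m^2" using m0 by (simp add: power_strict_mono)
  then have sq: "(V-k)^2 > l*(V+1/s)" unfolding m2 by (simp add: algebra_simps power2_eq_square)
  have pos: "V - k > 0" using hv m0 l by linarith
  have "V - k > sqrt (l*(V+1/s))"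
  proof (rule ccontr)
    assume "\<not> sqrt (l * (V + 1 / s)) < V - k"
    then have "V - k \<le> sqrt (l * (V + 1 / s))" by simp
    then have "(V-k)^2 \<le> (sqrt (l * (V + 1 / s)))^2" using pos by (simp add: power_mono)
    also have "\<dots> = l*(V+1/s)" using l V s by simp
    finally show False using sq by simp
  qed
  then show ?thesis unfolding k_def .
qed

lemma t1:
  fixes z th sM y lam V :: real
  assumes V: "V>0" and y0: "y>0" and l: "lam>0" and h: "(1-z)*(lam*th/(V^2*y^2))*(V^2*y*sM) = lam*(1+th*sM)"
  shows "(1-z)*th*sM = y*(1+th*sM)"
proof -
  have h1: "(1-z)*(lam*th/(V^2*y^2))*(V^2*y*sM) = lam*((1-z)*th*sM/y)" using V y0 by (simp add: field_simps power2_eq_square)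
  have "lam*((1-z)*th*sM/y) = lam*(1+th*sM)" using h unfolding h1 .
  then have "(1-z)*th*sM/y = 1+th*sM" using l by (metis mult_left_cancel less_irrefl)
  then have "(1-z)*th*sM = (1+th*sM)*y" using y0 by (simp add: divide_eq_eq)
  then show ?thesis by (simp add: mult.commute)
qed
lemma t2:
  fixes z th sM y a sA :: real
  assumes e2: "(1-z)*th*sM = y*(1+th*sM)" and sm: "sM*y*a = sA*(1-y)"
  shows "th*sA*(1-y)*(1-z-y) = y^2*a"
proof -
  have "(1-z)*th*(sM*y*a) = y^2*a + y*th*(sM*y*a)"
    using arg_cong[where f="\<lambda>x. x*(y*a)", OF e2] by (simp add: algebra_simps power2_eq_square)
  then have h: "(1-z)*th*(sA*(1-y)) = y^2*a + y*th*(sA*(1-y))" unfolding sm .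
  show ?thesis using h by (simp add: algebra_simps power2_eq_square)
qed
lemma t3:
  fixes z th y a sA V :: real
  assumes e3: "th*sA*(1-y)*(1-z-y) = y^2*a" and a: "a \<noteq> 0" and th: "th \<noteq> 0"
  shows "(V*sA/a)*(1-y)*(1-y-z) - (V/th)*y^2 = 0"
proof -
  have "(V*sA/a)*(1-y)*(1-y-z) - (V/th)*y^2 = (V/(a*th))*(th*sA*(1-y)*(1-z-y) - y^2*a)"
    using a th by (simp add: field_simps)
  then show ?thesis using e3 by simp
qed

lemma uniqH:
  fixes c q y1 y2 z1 z2 :: real
  assumes c: "c>0" and q: "q>0" and y1: "0<y1" "y1<1" and y2: "0<y2" "y2<1"
    and yl: "y1<y2" and zl: "z1<z2"
    and h1: "c*(1-y1)*(1-y1-z1) - q*y1^2 = 0" and h2: "c*(1-y2)*(1-y2-z2) - q*y2^2 = 0"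
  shows False
proof -
  have "c*(1-y2)*(1-y2-z2) > 0" using h2 q y2 by simp
  moreover have cy: "c*(1-y2) > 0" using c y2 by simp
  ultimately have p2: "1-y2-z2 > 0" using zero_less_mult_pos by blast
  have p1: "1-y1-z1 > 1-y2-z2" using yl zl by simp
  have "(1-y2)*(1-y2-z2) < (1-y1)*(1-y1-z1)"
    using p1 p2 yl y2 by (intro mult_strict_mono) auto
  then have "c*(1-y2)*(1-y2-z2) < c*(1-y1)*(1-y1-z1)" using c by simp
  moreover have "q*y1^2 < q*y2^2" using q y1 yl by (simp add: power_strict_mono)
  ultimately show False using h1 h2 by linarith
qed

theorem corollary2:
  fixes sA cTX phi theta lam V zeta sM :: real
  assumes sA_pos: "sA > 0" and c_pos: "cTX > 0" and phi_pos: "phi > 0"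
    and theta_def: "theta = phi / cTX"
    and lam_pos: "0 < lam" and lam_lt: "lam < lambda_th sA theta"
    and V_range: "0 < V" "V \<le> 1"
    and zeta_nonneg: "zeta \<ge> 0" and sM_nonneg: "sM \<ge> 0"
    and zero_conv: "zeta = 0 \<longrightarrow> sM = 0"
    and minimizer: "\<forall>z \<ge> 0. \<forall>t \<ge> 0.
        myopic_cost sA theta lam zeta sM V \<le> myopic_cost sA theta lam z t V"
  shows "(V \<le> v_th sA theta lam \<longrightarrow> zeta = 0 \<and> sM = 0)
       \<and> (V > v_th sA theta lam \<longrightarrow>
            sM = (exp (- zeta / 2) / sqrt (lam * theta) - 1 / V) * (V * sA / (1 + V * sA))
          \<and> 0 < zeta \<and> zeta < min 1 (2 * ln (V / sqrt (lam * theta)))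
          \<and> zeta_eq sA theta lam V zeta
          \<and> (\<forall>z. 0 < z \<and> z < min 1 (2 * ln (V / sqrt (lam * theta)))
                  \<and> zeta_eq sA theta lam V z \<longrightarrow> z = zeta))"
proof -
  have th: "theta > 0" unfolding theta_def using c_pos phi_pos by simp
  have V: "V > 0" using V_range by simp
  note s = sA_pos
  note l = lam_pos
  define k where "k = sqrt(lam*theta)"
  have k0: "k > 0" and kk: "k^2 = lam*theta" unfolding k_def using l th by auto
  define a where "a = 1 + V*sA"
  have a0: "a > 0" unfolding a_def using V s by (simp add: add_pos_pos)
  define Cf where "Cf z t = V - z*exp(-z)*(V^2*sA*t/(sA+a*t)) + lam*z*(1+theta*t)" for z t
  have ceq: "myopic_cost sA theta lam z t V = Cf z t" if "t \<ge> 0" for z t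
    unfolding Cf_def a_def using cost_eq[OF s V that] .
  have minC: "Cf zeta sM \<le> Cf z t" if "z \<ge> 0" "t \<ge> 0" for z t
    using minimizer that sM_nonneg ceq by metis
  have C00: "Cf 0 0 = V" unfolding Cf_def by simp
  have Cle: "Cf zeta sM \<le> V" using minC[of 0 0] C00 by simp
  have den: "sA + a*t > 0" if "t \<ge> 0" for t using s a0 that by (simp add: add_pos_nonneg)
  have part1: "zeta = 0 \<and> sM = 0" if hle: "V \<le> v_th sA theta lam"
  proof -
    have ki: "V^2*sA*sM \<le> lam*(1+theta*sM)*(sA+a*sM)"
      unfolding a_def using keyineq[OF s th l V sM_nonneg vth_le[OF s th l V hle]] .
    define P where "P = V^2*sA*sM/(sA+a*sM)"
    define B where "B = lam*(1+theta*sM)"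
    have B0: "B > 0" unfolding B_def using l th sM_nonneg by (simp add: add_pos_nonneg)
    have PB: "P \<le> B" unfolding P_def B_def using ki den[OF sM_nonneg] by (simp add: divide_le_eq)
    have z0: "zeta = 0"
    proof (rule ccontr)
      assume "zeta \<noteq> 0"
      then have zp: "zeta > 0" using zeta_nonneg by simp
      have e1: "exp(-zeta) < 1" using zp by simp
      have "exp(-zeta)*P \<le> exp(-zeta)*B" using PB by simp
      also have "\<dots> < B" using e1 B0 by simp
      finally have "zeta*(exp(-zeta)*P) < zeta*B" using zp by simp
      moreover have "Cf zeta sM = V - zeta*(exp(-zeta)*P) + zeta*B"
        unfolding Cf_def P_def B_def by (simp add: algebra_simps)
      ultimately show False using Cle by linarith
    qed
    then show ?thesis using zero_conv by simp
  qed
  have part2: "sM = (exp (- zeta / 2) / sqrt (lam * theta) - 1 / V) * (V * sA / (1 + V * sA))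
          \<and> 0 < zeta \<and> zeta < min 1 (2 * ln (V / sqrt (lam * theta)))
          \<and> zeta_eq sA theta lam V zeta
          \<and> (\<forall>z. 0 < z \<and> z < min 1 (2 * ln (V / sqrt (lam * theta)))
                  \<and> zeta_eq sA theta lam V z \<longrightarrow> z = zeta)" if hgt: "V > v_th sA theta lam"
  proof -
    define t0 where "t0 = sA*sqrt(lam*theta)*sqrt(lam*(V+1/sA))/(lam*theta*(1+V*sA))"
    note si = strict_ineq[OF s th l V vth_gt[OF s th l V hgt], folded t0_def a_def]
    have t0: "t0 > 0" using si(1) .
    define P0 where "P0 = V^2*sA*t0/(sA+a*t0)"
    define B0 where "B0 = lam*(1+theta*t0)"
    have B0p: "B0 > 0" unfolding B0_def using l th t0 by (simp add: add_pos_pos)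
    have PB0: "P0 > B0" unfolding P0_def B0_def using si(2) den[of t0] t0 by (simp add: less_divide_eq)
    have P0p: "P0 > 0" using PB0 B0p by simp
    define z0 where "z0 = (P0 - B0)/(2*P0)"
    have z0p: "z0 > 0" unfolding z0_def using PB0 P0p by simp
    have "1 - z0 \<le> exp(-z0)" using exp_ge_add_one_self[of "-z0"] by simp
    then have "(1-z0)*P0 \<le> exp(-z0)*P0" using P0p by (simp add: mult_right_mono)
    moreover have "(1-z0)*P0 = (P0+B0)/2" unfolding z0_def using P0p by (simp add: field_simps)
    ultimately have "exp(-z0)*P0 > B0" using PB0 by simp
    then have "z0*(exp(-z0)*P0) > z0*B0" using z0p by simp
    moreover have "Cf z0 t0 = V - z0*(exp(-z0)*P0) + z0*B0"
      unfolding Cf_def P0_def B0_def by (simp add: algebra_simps)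
    ultimately have Clt: "Cf z0 t0 < V" by linarith
    have Cmin: "Cf zeta sM < V" using minC[of z0 t0] z0p t0 Clt by simp
    have zp: "zeta > 0"
    proof (rule ccontr)
      assume "\<not> zeta > 0"
      then have "zeta = 0" using zeta_nonneg by simp
      then have "sM = 0" using zero_conv by simp
      then show False using Cmin \<open>zeta = 0\<close> C00 by simp
    qed
    have sp: "sM > 0"
    proof (rule ccontr)
      assume "\<not> sM > 0"
      then have "sM = 0" using sM_nonneg by simp
      then have "Cf zeta sM = V + lam*zeta" unfolding Cf_def by simp
      then show False using Cmin mult_pos_pos[OF l zp] by simp
    qed
    define u where "u = sA + a*sM"
    have u0: "u > 0" unfolding u_def using den sM_nonneg by simp
    define P where "P = V^2*sA*sM/u"
    have P0: "P > 0" unfolding P_def using V s sp u0 by simp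
    have Dt: "((\<lambda>t. Cf zeta t) has_real_derivative
       (- zeta*exp(-zeta)*(V^2*sA^2/(sA+a*sM)^2) + lam*zeta*theta)) (at sM)"
      unfolding Cf_def using u0 unfolding u_def
      by (auto intro!: derivative_eq_intros simp: field_simps power2_eq_square)
    have "- zeta*exp(-zeta)*(V^2*sA^2/(sA+a*sM)^2) + lam*zeta*theta = 0"
    proof (rule DERIV_local_min[OF Dt sp], intro allI impI)
      fix y assume "\<bar>sM - y\<bar> < sM"
      then have "y \<ge> 0" by linarith
      then show "Cf zeta sM \<le> Cf zeta y" using minC zeta_nonneg by simp
    qed
    then have "zeta*(exp(-zeta)*(V^2*sA^2/u^2)) = zeta*(lam*theta)" unfolding u_def[symmetric]
      by (simp add: algebra_simps)
    then have "exp(-zeta)*(V^2*sA^2/u^2) = lam*theta" using zp by (metis mult_left_cancel less_irrefl)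
    then have "exp(-zeta)*(V^2*sA^2) = k^2*u^2" using u0 kk by (simp add: field_simps)
    moreover have "exp(-zeta) = exp(-zeta/2)^2" by (simp add: power2_eq_square flip: exp_add)
    ultimately have "(exp(-zeta/2)*V*sA)^2 = (k*u)^2" by (simp add: power_mult_distrib)
    then have ut: "exp(-zeta/2)*V*sA = k*u" using V s k0 u0
      by (subst (asm) power2_eq_iff_nonneg) auto
    have Dz: "((\<lambda>z. Cf z sM) has_real_derivative
       (- (1-zeta)*exp(-zeta)*P + lam*(1+theta*sM))) (at zeta)"
    proof -
      have "(\<lambda>z. Cf z sM) = (\<lambda>z. V - z*exp(-z)*P + lam*z*(1+theta*sM))"
        unfolding Cf_def P_def u_def by simp
      moreover have "((\<lambda>z. V - z*exp(-z)*P + lam*z*(1+theta*sM)) has_real_derivative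
        (- (1-zeta)*exp(-zeta)*P + lam*(1+theta*sM))) (at zeta)"
        by (auto intro!: derivative_eq_intros simp: field_simps power2_eq_square)
      ultimately show ?thesis by simp
    qed
    have focz: "- (1-zeta)*exp(-zeta)*P + lam*(1+theta*sM) = 0"
    proof (rule DERIV_local_min[OF Dz zp], intro allI impI)
      fix y assume "\<bar>zeta - y\<bar> < zeta"
      then have "y \<ge> 0" by linarith
      then show "Cf zeta sM \<le> Cf y sM" using minC sM_nonneg by simp
    qed
    have Bp: "lam*(1+theta*sM) > 0" using l th sM_nonneg by (simp add: add_pos_nonneg)
    have z1: "zeta < 1"
    proof (rule ccontr)
      assume "\<not> zeta < 1"
      then have "(1-zeta)*exp(-zeta)*P \<le> 0" using P0 by (simp add: mult_nonpos_nonneg)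
      then show False using focz Bp by linarith
    qed
    define W where "W = exp(zeta/2)"
    have W0: "W > 0" unfolding W_def by simp
    have Wm: "exp(-zeta/2) = 1/W" unfolding W_def by (simp add: exp_minus field_simps flip: exp_add)
    define y where "y = k*W/V"
    have y0: "y > 0" unfolding y_def using k0 W0 V by simp
    have uy: "u = sA/y" using ut unfolding Wm y_def using k0 W0 V by (simp add: field_simps)
    have "u > sA" unfolding u_def using a0 sp by simp
    then have "sA < sA/y" unfolding uy .
    then have "sA*y < sA*1" using y0 by (simp add: less_divide_eq mult.commute)
    then have y1: "y < 1" using s by (simp only: mult_less_cancel_left_pos)
    have Wl: "W < V/k" using y1 unfolding y_def using k0 V by (simp add: field_simps)
    have zl: "zeta < 2 * ln (V / k)"
    proof -
      have "exp(zeta/2) < exp(ln(V/k))" using Wl unfolding W_def using V k0 by simp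
      then show ?thesis by simp
    qed
    have sMf: "sM = (exp (- zeta / 2) / k - 1 / V) * (V * sA / (1 + V * sA))"
    proof -
      have hh: "V*(k*sA + (k*sM + V*(k*(sA*sM)))) = V*(V*(sA*exp(-(zeta/2))))"
        using ut unfolding u_def a_def by (simp add: algebra_simps)
      have n1: "k + V*(k*sA) \<noteq> 0" "V*k + V*(V*(k*sA)) \<noteq> 0"
        using mult_pos_pos[OF k0 a0] mult_pos_pos[OF V mult_pos_pos[OF k0 a0]] unfolding a_def
        by (simp_all add: algebra_simps)
      show ?thesis using n1 V k0 a0[unfolded a_def] hh
        by (simp add: field_simps)
    qed
    have sMy: "sM = sA*(1-y)/(y*a)" using uy unfolding u_def using y0 a0 by (simp add: field_simps)
    have Py: "P = V^2*y*sM" unfolding P_def uy using y0 s by (simp add: field_simps)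
    have ez: "exp(-zeta) = lam*theta/(V^2*y^2)"
    proof -
      have "exp(-zeta) = exp(-zeta/2)^2" by (simp add: power2_eq_square flip: exp_add)
      also have "\<dots> = k^2/(V^2*y^2)" unfolding Wm y_def using V k0 W0 by (simp add: field_simps)
      finally show ?thesis unfolding kk .
    qed
    have "(1-zeta)*(lam*theta/(V^2*y^2))*(V^2*y*sM) = lam*(1+theta*sM)"
    proof -
      have "(1-zeta)*exp(-zeta)*P = lam*(1+theta*sM)" using focz by linarith
      then show ?thesis unfolding ez Py .
    qed
    then have e2: "(1-zeta)*theta*sM = y*(1+theta*sM)" by (rule t1[OF V y0 l])
    have "sM*y*a = (u - sA)*y" unfolding u_def by (simp add: algebra_simps)
    also have "\<dots> = sA*(1-y)" unfolding uy using y0 by (simp add: field_simps)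
    finally have smya: "sM*y*a = sA*(1-y)" .
    have e3: "theta*sA*(1-y)*(1-zeta-y) = y^2*a" by (rule t2[OF e2 smya])
    have Hz: "(V*sA/(1+V*sA))*(1-y)*(1-y-zeta) - (V/theta)*y^2 = 0"
      using t3[OF e3, of V] th a0 unfolding a_def by simp
    have yW: "y = sqrt(lam*theta)*exp(zeta/2)/V" unfolding y_def k_def W_def ..
    have zeq: "zeta_eq sA theta lam V zeta" using zeta_eq_iff[OF s V _ _ yW] Hz z1 l th by simp
    have uniq: "z = zeta" if hz: "0 < z \<and> z < min 1 (2 * ln (V / k)) \<and> zeta_eq sA theta lam V z" for z
    proof -
      define yz where "yz = k*exp(z/2)/V"
      have yz0: "yz > 0" unfolding yz_def using k0 V by simp
      have "exp(z/2) < exp(ln(V/k))" using hz by simp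
      then have "exp(z/2) < V/k" using V k0 by simp
      then have yz1: "yz < 1" unfolding yz_def using k0 V by (simp add: field_simps)
      have Hzz: "(V*sA/(1+V*sA))*(1-yz)*(1-yz-z) - (V/theta)*yz^2 = 0"
        using zeta_eq_iff[OF s V _ _, of lam theta z yz] hz l th unfolding yz_def k_def by simp
      have c: "V*sA/(1+V*sA) > 0" using V s a0[unfolded a_def] by simp
      have q: "V/theta > 0" using V th by simp
      show ?thesis
      proof (rule linorder_cases[of z zeta])
        assume lt: "z < zeta"
        have "yz < y" unfolding yz_def y_def W_def using lt k0 V by (simp add: divide_strict_right_mono)
        then show ?thesis using uniqH[OF c q yz0 yz1 y0 y1 _ lt Hzz Hz] by simp
      next
        assume gt: "zeta < z"
        have "y < yz" unfolding yz_def y_def W_def using gt k0 V by (simp add: divide_strict_right_mono)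
        then show ?thesis using uniqH[OF c q y0 y1 yz0 yz1 _ gt Hz Hzz] by simp
      qed simp
    qed
    have kdef: "sqrt(lam*theta) = k" by (simp add: k_def)
    show ?thesis unfolding kdef
    proof (intro conjI allI impI)
      show "sM = (exp (- zeta / 2) / k - 1 / V) * (V * sA / (1 + V * sA))" by (rule sMf)
      show "0 < zeta" by (rule zp)
      show "zeta < min 1 (2 * ln (V / k))" using z1 zl by simp
      show "zeta_eq sA theta lam V zeta" by (rule zeq)
    next
      fix z assume "0 < z \<and> z < min 1 (2 * ln (V / k)) \<and> zeta_eq sA theta lam V z"
      then show "z = zeta" by (rule uniq)
    qed
  qed
  show ?thesis using part1 part2 by blast
qed

end
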